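(* Let $\mathcal{J}=(a,b)$ be a finite interval, $m\geq 3$, $Q\in L_1(\mathcal{J};\mathbb{C})$, and let $\widetilde Q=Q+c$ for a constant $c\in\mathbb{C}$. Let $L_{\max}(Q),L_{\min}(Q)$ and $L_{\max}(\widetilde Q),L_{\min}(\widetilde Q)$ be the maximal and minimal quasi-differential operators in $L_2(\mathcal{J};\mathbb{C})$ constructed from $Q$ and from $\widetilde Q$ respectively. Then $L_{\max}(\widetilde Q)=L_{\max}(Q)$ and $L_{\min}(\widetilde Q)=L_{\min}(Q)$ (equal domains and equal actions).
   Context: For $P\in L_1(\mathcal{J};\mathbb{C})$ define quasi-derivatives $D^{[k]}_Py=y^{(k)}$ for $k=0,\dots,m-2$; $D^{[m-1]}_Py=y^{(m-1)}+i^{-m}Py$; $D^{[m]}_Py=(D^{[m-1]}_Py)'-i^{-m}P\,D^{[1]}_Py$. The maximal operator $L_{\max}(P)$ acts by $y\mapsto i^mD^{[m]}_Py$ on the domain $\{y: D^{[k]}_Py\in AC([a,b];\mathbb{C}),\ k=0,\dots,m-1,\ D^{[m]}_Py\in L_2(\mathcal{J};\mathbb{C})\}$. The minimal operator $L_{\min}(P)$ is the restriction of $L_{\max}(P)$ to $\{y\in\operatorname{Dom}L_{\max}(P): D^{[k]}_Py(a)=D^{[k]}_Py(b)=0,\ k=0,\dots,m-1\}$. These regularize the formal expression $i^my^{(m)}+qy$ with $q=P'$ in the distributional sense. *)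

theory Defs
  imports "HOL-Analysis.Analysis"
begin

definition abs_cont_on :: "(real \<Rightarrow> complex) \<Rightarrow> real \<Rightarrow> real \<Rightarrow> bool" where
  "abs_cont_on f a b \<longleftrightarrow>
     (\<forall>\<epsilon>>0. \<exists>\<delta>>0. \<forall>(n::nat) (s::nat \<Rightarrow> real) (t::nat \<Rightarrow> real).
        (\<forall>i<n. a \<le> s i \<and> s i \<le> t i \<and> t i \<le> b) \<and>
        (\<forall>i<n. \<forall>j<n. i \<noteq> j \<longrightarrow> t i \<le> s j \<or> t j \<le> s i) \<and>
        (\<Sum>i<n. t i - s i) < \<delta>
        \<longrightarrow> (\<Sum>i<n. norm (f (t i) - f (s i))) < \<epsilon>)"

definition L1_on :: "real \<Rightarrow> real \<Rightarrow> (real \<Rightarrow> complex) \<Rightarrow> bool" where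
  "L1_on a b f \<longleftrightarrow> integrable (lebesgue_on {a<..<b}) f"

definition L2_on :: "real \<Rightarrow> real \<Rightarrow> (real \<Rightarrow> complex) \<Rightarrow> bool" where
  "L2_on a b f \<longleftrightarrow> f \<in> borel_measurable (lebesgue_on {a<..<b}) \<and>
                   integrable (lebesgue_on {a<..<b}) (\<lambda>x. (norm (f x))\<^sup>2)"

text \<open>d is a family of quasi-derivatives of y w.r.t. P:
  d k = D^[k]_P y for k = 0..m. Derivatives of absolutely continuous functions
  are understood almost everywhere on (a,b).\<close>
definition quasi_derivs ::
    "nat \<Rightarrow> real \<Rightarrow> real \<Rightarrow> (real \<Rightarrow> complex) \<Rightarrow> (real \<Rightarrow> complex) \<Rightarrow> (nat \<Rightarrow> real \<Rightarrow> complex) \<Rightarrow> bool" where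
  "quasi_derivs m a b P y d \<longleftrightarrow>
     (\<forall>x\<in>{a..b}. d 0 x = y x) \<and>
     (\<forall>k<m. abs_cont_on (d k) a b) \<and>
     (\<forall>k. k + 1 \<le> m - 2 \<longrightarrow>
        (AE x in lebesgue_on {a<..<b}. (d k has_vector_derivative d (k + 1) x) (at x))) \<and>
     (AE x in lebesgue_on {a<..<b}.
        (d (m - 2) has_vector_derivative (d (m - 1) x - inverse (\<i> ^ m) * P x * y x)) (at x)) \<and>
     (AE x in lebesgue_on {a<..<b}.
        (d (m - 1) has_vector_derivative (d m x + inverse (\<i> ^ m) * P x * d 1 x)) (at x))"

definition L_max_graph :: "nat \<Rightarrow> real \<Rightarrow> real \<Rightarrow> (real \<Rightarrow> complex) \<Rightarrow>
    ((real \<Rightarrow> complex) \<times> (real \<Rightarrow> complex)) set" where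
  "L_max_graph m a b P = {(y, f). \<exists>d. quasi_derivs m a b P y d \<and> L2_on a b (d m) \<and>
       (AE x in lebesgue_on {a<..<b}. f x = \<i> ^ m * d m x)}"

definition L_min_graph :: "nat \<Rightarrow> real \<Rightarrow> real \<Rightarrow> (real \<Rightarrow> complex) \<Rightarrow>
    ((real \<Rightarrow> complex) \<times> (real \<Rightarrow> complex)) set" where
  "L_min_graph m a b P = {(y, f). \<exists>d. quasi_derivs m a b P y d \<and> L2_on a b (d m) \<and>
       (\<forall>k<m. d k a = 0 \<and> d k b = 0) \<and>
       (AE x in lebesgue_on {a<..<b}. f x = \<i> ^ m * d m x)}"

end

theory Submission
  imports Defs
begin

lemma ac_scale:
  assumes "abs_cont_on g a b"
  shows "abs_cont_on (\<lambda>x. k * g x) a b"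
  unfolding abs_cont_on_def
proof (intro allI impI)
  fix e :: real assume e: "e > 0"
  have "e / (norm k + 1) > 0" using e by (smt (verit) norm_ge_zero divide_pos_pos)
  then obtain d where d: "d > 0" and H: "\<forall>(n::nat) (s::nat \<Rightarrow> real) (t::nat \<Rightarrow> real).
        (\<forall>i<n. a \<le> s i \<and> s i \<le> t i \<and> t i \<le> b) \<and>
        (\<forall>i<n. \<forall>j<n. i \<noteq> j \<longrightarrow> t i \<le> s j \<or> t j \<le> s i) \<and>
        (\<Sum>i<n. t i - s i) < d
        \<longrightarrow> (\<Sum>i<n. norm (g (t i) - g (s i))) < e / (norm k + 1)"
    using assms[unfolded abs_cont_on_def, rule_format, OF \<open>e / (norm k + 1) > 0\<close>] by blast
  show "\<exists>d>0. \<forall>(n::nat) (s::nat \<Rightarrow> real) (t::nat \<Rightarrow> real).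
        (\<forall>i<n. a \<le> s i \<and> s i \<le> t i \<and> t i \<le> b) \<and>
        (\<forall>i<n. \<forall>j<n. i \<noteq> j \<longrightarrow> t i \<le> s j \<or> t j \<le> s i) \<and>
        (\<Sum>i<n. t i - s i) < d
        \<longrightarrow> (\<Sum>i<n. norm (k * g (t i) - k * g (s i))) < e"
  proof (intro exI[of _ d] conjI allI impI d)
    fix n s t
    assume A: "(\<forall>i<n. a \<le> s i \<and> s i \<le> t i \<and> t i \<le> b) \<and>
        (\<forall>i<(n::nat). \<forall>j<n. i \<noteq> j \<longrightarrow> t i \<le> s j \<or> t j \<le> s i) \<and>
        (\<Sum>i<n. t i - s i) < d"
    have X: "(\<Sum>i<n. norm (g (t i) - g (s i))) < e / (norm k + 1)" using H A by blast
    have "(\<Sum>i<n. norm (k * g (t i) - k * g (s i))) = norm k * (\<Sum>i<n. norm (g (t i) - g (s i)))"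
      by (simp add: sum_distrib_left norm_mult right_diff_distrib[symmetric])
    also have "\<dots> \<le> norm k * (e / (norm k + 1))"
      using X by (intro mult_left_mono) auto
    also have "\<dots> < e"
    proof -
      have p: "norm k + 1 > 0" by (smt (verit) norm_ge_zero)
      have "norm k * e < (norm k + 1) * e" using e by simp
      then show ?thesis using p by (simp add: field_simps)
    qed
    finally show "(\<Sum>i<n. norm (k * g (t i) - k * g (s i))) < e" .
  qed
qed

lemma ac_add:
  assumes "abs_cont_on f a b" "abs_cont_on g a b"
  shows "abs_cont_on (\<lambda>x. f x + g x) a b"
  unfolding abs_cont_on_def
proof (intro allI impI)
  fix e :: real assume e: "e > 0"
  have "e / 2 > 0" using e by simp
  then obtain d1 where d1: "d1 > 0" and H1: "\<forall>(n::nat) (s::nat \<Rightarrow> real) (t::nat \<Rightarrow> real).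
        (\<forall>i<n. a \<le> s i \<and> s i \<le> t i \<and> t i \<le> b) \<and>
        (\<forall>i<n. \<forall>j<n. i \<noteq> j \<longrightarrow> t i \<le> s j \<or> t j \<le> s i) \<and>
        (\<Sum>i<n. t i - s i) < d1
        \<longrightarrow> (\<Sum>i<n. norm (f (t i) - f (s i))) < e / 2"
    using assms(1)[unfolded abs_cont_on_def, rule_format, OF \<open>e/2>0\<close>] by blast
  obtain d2 where d2: "d2 > 0" and H2: "\<forall>(n::nat) (s::nat \<Rightarrow> real) (t::nat \<Rightarrow> real).
        (\<forall>i<n. a \<le> s i \<and> s i \<le> t i \<and> t i \<le> b) \<and>
        (\<forall>i<n. \<forall>j<n. i \<noteq> j \<longrightarrow> t i \<le> s j \<or> t j \<le> s i) \<and>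
        (\<Sum>i<n. t i - s i) < d2
        \<longrightarrow> (\<Sum>i<n. norm (g (t i) - g (s i))) < e / 2"
    using assms(2)[unfolded abs_cont_on_def, rule_format, OF \<open>e/2>0\<close>] by blast
  show "\<exists>d>0. \<forall>(n::nat) (s::nat \<Rightarrow> real) (t::nat \<Rightarrow> real).
        (\<forall>i<n. a \<le> s i \<and> s i \<le> t i \<and> t i \<le> b) \<and>
        (\<forall>i<n. \<forall>j<n. i \<noteq> j \<longrightarrow> t i \<le> s j \<or> t j \<le> s i) \<and>
        (\<Sum>i<n. t i - s i) < d
        \<longrightarrow> (\<Sum>i<n. norm (f (t i) + g (t i) - (f (s i) + g (s i)))) < e"
  proof (intro exI[of _ "min d1 d2"] conjI allI impI)
    show "min d1 d2 > 0" using d1 d2 by simp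
    fix n s t
    assume A: "(\<forall>i<n. a \<le> s i \<and> s i \<le> t i \<and> t i \<le> b) \<and>
        (\<forall>i<(n::nat). \<forall>j<n. i \<noteq> j \<longrightarrow> t i \<le> s j \<or> t j \<le> s i) \<and>
        (\<Sum>i<n. t i - s i) < min d1 d2"
    have X: "(\<Sum>i<n. norm (f (t i) - f (s i))) < e / 2" using H1 A by auto
    have Y: "(\<Sum>i<n. norm (g (t i) - g (s i))) < e / 2" using H2 A by auto
    have "(\<Sum>i<n. norm (f (t i) + g (t i) - (f (s i) + g (s i))))
       \<le> (\<Sum>i<n. norm (f (t i) - f (s i)) + norm (g (t i) - g (s i)))"
      by (intro sum_mono) (metis add_diff_add norm_triangle_ineq)
    also have "\<dots> < e" using X Y by (simp add: sum.distrib)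
    finally show "(\<Sum>i<n. norm (f (t i) + g (t i) - (f (s i) + g (s i)))) < e" .
  qed
qed

lemma qd_shift:
  fixes c :: complex
  assumes q: "quasi_derivs m a b P y d" and m: "m \<ge> 3"
  defines "d' \<equiv> d(m - 1 := (\<lambda>x. d (m - 1) x + inverse (\<i> ^ m) * c * d 0 x))"
  shows "quasi_derivs m a b (\<lambda>x. P x + c) y d'"
proof -
  have ne: "m - 1 \<noteq> 0" "m - 1 \<noteq> m" "m - 1 \<noteq> m - 2" "m - 1 \<noteq> 1" using m by auto
  note Q = q[unfolded quasi_derivs_def]
  have d0: "AE x in lebesgue_on {a<..<b}. (d 0 has_vector_derivative d 1 x) (at x)"
  proof -
    have "0 + 1 \<le> m - 2" using m by simp
    then show ?thesis using Q by (metis add_0)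
  qed
  have dd': "\<And>k. k \<noteq> m - 1 \<Longrightarrow> d' k = d k" unfolding d'_def by auto
  have "\<forall>x\<in>{a..b}. d' 0 x = y x" using Q ne dd' by auto
  moreover have "\<forall>k<m. abs_cont_on (d' k) a b"
  proof (intro allI impI)
    fix k assume k: "k < m"
    show "abs_cont_on (d' k) a b"
    proof (cases "k = m - 1")
      case True
      have "abs_cont_on (d (m - 1)) a b" "abs_cont_on (d 0) a b" using Q m by auto
      then show ?thesis using True unfolding d'_def
        by (simp add: ac_add ac_scale)
    next
      case False then show ?thesis using Q k dd' by auto
    qed
  qed
  moreover have "\<forall>k. k + 1 \<le> m - 2 \<longrightarrow>
        (AE x in lebesgue_on {a<..<b}. (d' k has_vector_derivative d' (k + 1) x) (at x))"
  proof (intro allI impI)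
    fix k assume k: "k + 1 \<le> m - 2"
    then have "k \<noteq> m - 1" "k + 1 \<noteq> m - 1" using m by auto
    then show "AE x in lebesgue_on {a<..<b}. (d' k has_vector_derivative d' (k + 1) x) (at x)"
      using Q k dd' by auto
  qed
  moreover have "AE x in lebesgue_on {a<..<b}.
        (d' (m - 2) has_vector_derivative (d' (m - 1) x - inverse (\<i> ^ m) * (P x + c) * y x)) (at x)"
  proof -
    have y0: "\<forall>x\<in>{a..b}. d 0 x = y x" using Q by blast
    have "AE x in lebesgue_on {a<..<b}. x \<in> {a<..<b}"
      by (rule AE_I2) (auto simp: space_restrict_space)
    moreover have "AE x in lebesgue_on {a<..<b}.
        (d (m - 2) has_vector_derivative (d (m - 1) x - inverse (\<i> ^ m) * P x * y x)) (at x)"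
      using Q by blast
    ultimately show ?thesis
    proof (eventually_elim)
      case (elim x)
      then have "d 0 x = y x" using y0 by auto
      then have "d' (m - 1) x - inverse (\<i> ^ m) * (P x + c) * y x
          = d (m - 1) x - inverse (\<i> ^ m) * P x * y x"
        unfolding d'_def by (simp add: algebra_simps)
      then show ?case using elim dd'[OF ne(3)[symmetric]] by simp
    qed
  qed
  moreover have "AE x in lebesgue_on {a<..<b}.
        (d' (m - 1) has_vector_derivative (d' m x + inverse (\<i> ^ m) * (P x + c) * d' 1 x)) (at x)"
  proof -
    have "AE x in lebesgue_on {a<..<b}.
        (d (m - 1) has_vector_derivative (d m x + inverse (\<i> ^ m) * P x * d 1 x)) (at x)"
      using Q by blast
    with d0 show ?thesis
  proof (eventually_elim)
    case (elim x)
    have 1: "(d (m - 1) has_vector_derivative (d m x + inverse (\<i> ^ m) * P x * d 1 x)) (at x)"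
      using elim by auto
    have 2: "((\<lambda>x. inverse (\<i> ^ m) * c * d 0 x) has_vector_derivative (inverse (\<i> ^ m) * c * d 1 x)) (at x)"
      using elim by (intro has_vector_derivative_mult_right) blast
    have "((\<lambda>x. d (m - 1) x + inverse (\<i> ^ m) * c * d 0 x) has_vector_derivative
        (d m x + inverse (\<i> ^ m) * P x * d 1 x + inverse (\<i> ^ m) * c * d 1 x)) (at x)"
      using 1 2 by (rule has_vector_derivative_add)
    moreover have "d' (m - 1) = (\<lambda>x. d (m - 1) x + inverse (\<i> ^ m) * c * d 0 x)"
      unfolding d'_def by simp
    moreover have "d' m = d m" "d' 1 = d 1" using dd' ne by auto
    ultimately show ?case by (simp add: algebra_simps)
  qed
  qed
  ultimately show ?thesis unfolding quasi_derivs_def by blast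
qed

lemma max_sub:
  fixes c :: complex
  assumes m: "m \<ge> 3"
  shows "L_max_graph m a b P \<subseteq> L_max_graph m a b (\<lambda>x. P x + c)"
proof
  fix p assume "p \<in> L_max_graph m a b P"
  then obtain y f d where p: "p = (y, f)" and q: "quasi_derivs m a b P y d"
    and l: "L2_on a b (d m)" and ae: "AE x in lebesgue_on {a<..<b}. f x = \<i> ^ m * d m x"
    unfolding L_max_graph_def by auto
  let ?d = "d(m - 1 := (\<lambda>x. d (m - 1) x + inverse (\<i> ^ m) * c * d 0 x))"
  have q': "quasi_derivs m a b (\<lambda>x. P x + c) y ?d" using qd_shift[OF q m] .
  have "?d m = d m" using m by auto
  then show "p \<in> L_max_graph m a b (\<lambda>x. P x + c)"
    unfolding L_max_graph_def using p q' l ae by (intro CollectI) (auto intro!: exI[of _ ?d])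
qed

lemma min_sub:
  fixes c :: complex
  assumes m: "m \<ge> 3"
  shows "L_min_graph m a b P \<subseteq> L_min_graph m a b (\<lambda>x. P x + c)"
proof
  fix p assume "p \<in> L_min_graph m a b P"
  then obtain y f d where p: "p = (y, f)" and q: "quasi_derivs m a b P y d"
    and l: "L2_on a b (d m)" and bc: "\<forall>k<m. d k a = 0 \<and> d k b = 0"
    and ae: "AE x in lebesgue_on {a<..<b}. f x = \<i> ^ m * d m x"
    unfolding L_min_graph_def by auto
  let ?d = "d(m - 1 := (\<lambda>x. d (m - 1) x + inverse (\<i> ^ m) * c * d 0 x))"
  have q': "quasi_derivs m a b (\<lambda>x. P x + c) y ?d" using qd_shift[OF q m] .
  have e: "?d m = d m" using m by auto
  have bc': "\<forall>k<m. ?d k a = 0 \<and> ?d k b = 0"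
  proof (intro allI impI)
    fix k assume k: "k < m"
    have "0 < m" using m by simp
    then show "?d k a = 0 \<and> ?d k b = 0" using bc k by (cases "k = m - 1") auto
  qed
  show "p \<in> L_min_graph m a b (\<lambda>x. P x + c)"
    unfolding L_min_graph_def using p q' l ae e bc' by (intro CollectI) (auto intro!: exI[of _ ?d])
qed

theorem lemma2:
  fixes a b :: real and m :: nat and Q :: "real \<Rightarrow> complex" and c :: complex
  assumes "a < b" and "m \<ge> 3" and "L1_on a b Q"
  shows "L_max_graph m a b (\<lambda>x. Q x + c) = L_max_graph m a b Q \<and>
         L_min_graph m a b (\<lambda>x. Q x + c) = L_min_graph m a b Q"
proof -
  have e: "(\<lambda>x. (Q x + c) + - c) = Q" by simp
  have 1: "L_max_graph m a b (\<lambda>x. Q x + c) \<subseteq> L_max_graph m a b Q"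
    using max_sub[OF assms(2), of a b "\<lambda>x. Q x + c" "- c"] by (simp only: e)
  have 2: "L_min_graph m a b (\<lambda>x. Q x + c) \<subseteq> L_min_graph m a b Q"
    using min_sub[OF assms(2), of a b "\<lambda>x. Q x + c" "- c"] by (simp only: e)
  show ?thesis using 1 2 max_sub[OF assms(2), of a b Q c] min_sub[OF assms(2), of a b Q c]
    by blast
qed

end
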